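(* Let $n,d$ be natural numbers and $h$ an integer. Let $(z_j)$ be a sequence of Gaussian integers such that every two consecutive terms satisfy $|z_{j+1}-z_j|=1$, and suppose there are indices $j_1,j_2$ with $z_{j_2}-z_{j_1}=n+ih$. If $k(n,d)\geq |r(n,d)|+|h|+1$, then there exist indices $j_3,j_4$ with $z_{j_3}-z_{j_4}=d$.
   Context: For integers $n$ and $d\ge1$, $k(n,d)$ and $r(n,d)$ are the unique integers with $n=k(n,d)\,d+r(n,d)$ and $r(n,d)\in\left[-\lfloor d/2\rfloor,\ \lceil d/2\rceil-1\right]$. *)

theory Defs
  imports Complex_Main
begin

definition gauss_int :: "complex \<Rightarrow> bool" where
  "gauss_int z \<longleftrightarrow> Re z \<in> \<int> \<and> Im z \<in> \<int>"

definition cdiv_k :: "int \<Rightarrow> int \<Rightarrow> int" where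
  "cdiv_k n d = (THE k. \<exists>r. n = k * d + r \<and> - (d div 2) \<le> r \<and> r \<le> (d + 1) div 2 - 1)"

definition cdiv_r :: "int \<Rightarrow> int \<Rightarrow> int" where
  "cdiv_r n d = (THE r. \<exists>k. n = k * d + r \<and> - (d div 2) \<le> r \<and> r \<le> (d + 1) div 2 - 1)"

end

theory Submission
  imports Defs
begin


definition hc :: "int \<Rightarrow> (nat\<Rightarrow>int) \<Rightarrow> (nat\<Rightarrow>int) \<Rightarrow> int \<Rightarrow> int \<Rightarrow> nat \<Rightarrow> int" where
 "hc N X Y a b t = (if X (Suc t) = X t + 1 \<and> Y (Suc t) = Y t \<and> (X t - a) mod N = 0 \<and> Y t > b then 1 else 0)
   - (if X (Suc t) = X t - 1 \<and> Y (Suc t) = Y t \<and> (X (Suc t) - a) mod N = 0 \<and> Y t > b then 1 else 0)"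

definition HH :: "int \<Rightarrow> (nat\<Rightarrow>int) \<Rightarrow> (nat\<Rightarrow>int) \<Rightarrow> nat \<Rightarrow> int \<Rightarrow> int \<Rightarrow> int" where
 "HH N X Y M a b = (\<Sum>t<M. hc N X Y a b t)"

definition offp :: "int \<Rightarrow> (nat\<Rightarrow>int) \<Rightarrow> (nat\<Rightarrow>int) \<Rightarrow> nat \<Rightarrow> int \<Rightarrow> int \<Rightarrow> bool" where
 "offp N X Y M a b \<longleftrightarrow> \<not>(\<exists>s<M. Y s = b \<and> (X s - a) mod N = 0)"

definition fl :: "int \<Rightarrow> (nat\<Rightarrow>int) \<Rightarrow> (nat\<Rightarrow>int) \<Rightarrow> int \<Rightarrow> nat \<Rightarrow> int" where
 "fl N X Y a t = (if X (Suc t) = X t + 1 \<and> Y (Suc t) = Y t \<and> (X t - a) mod N = 0 then 1 else 0)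
   - (if X (Suc t) = X t - 1 \<and> Y (Suc t) = Y t \<and> (X (Suc t) - a) mod N = 0 then 1 else 0)"

lemma unit_cases:
  fixes dx dy :: int
  assumes "\<bar>dx\<bar> + \<bar>dy\<bar> = 1"
  shows "(dx = 1 \<and> dy = 0) \<or> (dx = -1 \<and> dy = 0) \<or> (dx = 0 \<and> dy = 1) \<or> (dx = 0 \<and> dy = -1)"
  using assms by arith

locale cyl =
  fixes N :: int and X Y :: "nat \<Rightarrow> int" and M :: nat
  assumes Npos: "N > 0"
    and steps: "\<forall>t<M. \<bar>X (Suc t) - X t\<bar> + \<bar>Y (Suc t) - Y t\<bar> = 1"
    and closeX: "X M = X 0 + N" and closeY: "Y M = Y 0"
begin

lemma on_suc:
  assumes "t < M" "Y (Suc t) = b" "(X (Suc t) - a) mod N = 0"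
  shows "\<not> offp N X Y M a b"
proof (cases "Suc t < M")
  case True
  have w: "Suc t < M \<and> Y (Suc t) = b \<and> (X (Suc t) - a) mod N = 0" using True assms by simp
  show ?thesis unfolding offp_def not_not using w by (intro exI[of _ "Suc t"]) simp
next
  case False
  hence "Suc t = M" using assms by simp
  have e: "X (Suc t) - a = (X 0 - a) + N" using \<open>Suc t = M\<close> closeX by simp
  have "(X 0 - a) mod N = 0" using assms(3) unfolding e by (simp only: mod_add_self2)
  moreover have "Y 0 = b" using \<open>Suc t = M\<close> closeY assms(2) by simp
  ultimately have "Y 0 = b" "(X 0 - a) mod N = 0" by auto
  moreover have "0 < M" using assms by simp
  ultimately show ?thesis unfolding offp_def not_not by (intro exI[of _ 0]) simp
qed

lemma vert:
  assumes off: "offp N X Y M a (b+1)"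
  shows "HH N X Y M a (b+1) = HH N X Y M a b"
  unfolding HH_def
proof (rule sum.cong[OF refl])
  fix t assume "t \<in> {..<M}"
  hence t: "t < M" by simp
  have n1: "\<not> (Y t = b + 1 \<and> (X t - a) mod N = 0)" using off t unfolding offp_def by auto
  have n2: "\<not> (Y (Suc t) = b + 1 \<and> (X (Suc t) - a) mod N = 0)" using on_suc[OF t] off by auto
  show "hc N X Y a (b + 1) t = hc N X Y a b t"
    unfolding hc_def using n1 n2 by auto
qed


lemma horiz:
  assumes off: "offp N X Y M (a+1) b"
  shows "HH N X Y M (a+1) b = HH N X Y M a b"
proof -
  define S where "S u v = (if (u - (a+1)) mod N = 0 \<and> v > b then 1 else 0::int)" for u v
  have step: "hc N X Y (a+1) b t - hc N X Y a b t = S (X t) (Y t) - S (X (Suc t)) (Y (Suc t))"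
    if t: "t < M" for t
  proof -
    have n1: "\<not> (Y t = b \<and> (X t - (a+1)) mod N = 0)" using off t unfolding offp_def by auto
    have n2: "\<not> (Y (Suc t) = b \<and> (X (Suc t) - (a+1)) mod N = 0)" using on_suc[OF t] off by auto
    from unit_cases[OF steps[rule_format, OF t]]
    show ?thesis
    proof (elim disjE conjE)
      assume "X (Suc t) - X t = 1" "Y (Suc t) - Y t = 0"
      hence e: "X (Suc t) = X t + 1" "Y (Suc t) = Y t" by auto
      have q: "X t + 1 - (a + 1) = X t - a" by simp
      show ?thesis unfolding hc_def S_def e by (simp add: q)
    next
      assume "X (Suc t) - X t = -1" "Y (Suc t) - Y t = 0"
      hence e: "X (Suc t) = X t - 1" "Y (Suc t) = Y t" by auto
      have q: "X t - 1 - a = X t - (a + 1)" by simp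
      show ?thesis unfolding hc_def S_def e by (simp add: q)
    next
      assume "X (Suc t) - X t = 0" "Y (Suc t) - Y t = 1"
      hence e: "X (Suc t) = X t" "Y (Suc t) = Y t + 1" by auto
      have "S (X t) (Y t) = S (X t) (Y t + 1)"
        using n1 unfolding S_def by (cases "Y t = b") auto
      thus ?thesis unfolding hc_def e by simp
    next
      assume "X (Suc t) - X t = 0" "Y (Suc t) - Y t = -1"
      hence e: "X (Suc t) = X t" "Y (Suc t) = Y t - 1" by auto
      have "S (X t) (Y t) = S (X t) (Y t - 1)"
        using n2 e unfolding S_def by (cases "Y t = b + 1") auto
      thus ?thesis unfolding hc_def e by simp
    qed
  qed
  have "HH N X Y M (a+1) b - HH N X Y M a b = (\<Sum>t<M. hc N X Y (a+1) b t - hc N X Y a b t)"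
    unfolding HH_def by (simp add: sum_subtractf)
  also have "\<dots> = (\<Sum>t<M. S (X t) (Y t) - S (X (Suc t)) (Y (Suc t)))"
    using step by (intro sum.cong) auto
  also have "\<dots> = S (X 0) (Y 0) - S (X M) (Y M)"
    by (rule sum_lessThan_telescope')
  also have "S (X M) (Y M) = S (X 0) (Y 0)"
  proof -
    have "(X 0 + N - (a + 1)) mod N = (X 0 - (a+1)) mod N"
    proof -
      have "X 0 + N - (a + 1) = (X 0 - (a+1)) + N" by simp
      thus ?thesis by (simp only: mod_add_self2)
    qed
    thus ?thesis unfolding S_def closeX closeY by simp
  qed
  finally show ?thesis by simp
qed

lemma mod_shiftN: "(x - (a + N)) mod N = (x - a) mod N"
proof -
  have "x - (a + N) = (x - a) - N" by simp
  thus ?thesis by (simp only: minus_mod_self2)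
qed

lemma HH_per: "HH N X Y M (a + N) b = HH N X Y M a b"
  unfolding HH_def hc_def by (simp add: mod_shiftN)

lemma offp_per: "offp N X Y M (a + N) b = offp N X Y M a b"
  unfolding offp_def by (simp add: mod_shiftN)

lemma HH_top:
  assumes "\<forall>t<M. Y t \<le> b"
  shows "HH N X Y M a b = 0"
  unfolding HH_def using assms by (intro sum.neutral) (auto simp: hc_def)

lemma divstep:
  fixes z :: int assumes "N > 0"
  shows "(z + 1) div N = z div N + (if (z + 1) mod N = 0 then 1 else 0)"
proof -
  have "(z + 1) div N = z div N + 1 div N + (z mod N + 1 mod N) div N" by (rule div_add1_eq)
  show ?thesis
  proof (cases "N = 1")
    case True thus ?thesis by simp
  next
    case False
    hence N2: "N \<ge> 2" using assms by simp
    have m1: "1 mod N = 1" "1 div N = 0" using N2 by auto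
    have r: "0 \<le> z mod N" "z mod N < N" using assms by auto
    show ?thesis
    proof (cases "z mod N = N - 1")
      case True
      have "(z + 1) mod N = ((z mod N) + 1) mod N" by (simp add: mod_add_left_eq)
      also have "\<dots> = 0" using True by simp
      finally have a: "(z+1) mod N = 0" .
      have "(z + 1) div N = z div N + 1"
        using \<open>(z + 1) div N = z div N + 1 div N + (z mod N + 1 mod N) div N\<close> m1 True assms by simp
      thus ?thesis using a by simp
    next
      case False
      hence lt: "z mod N + 1 < N" using r by simp
      have "(z + 1) mod N = ((z mod N) + 1) mod N" by (simp add: mod_add_left_eq)
      also have "\<dots> = z mod N + 1" using lt r by (simp add: mod_pos_pos_trivial)
      finally have a: "(z+1) mod N \<noteq> 0" using r by simp
      have "(z + 1) div N = z div N"
        using \<open>(z + 1) div N = z div N + 1 div N + (z mod N + 1 mod N) div N\<close> m1 lt r by (simp add: div_pos_pos_trivial)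
      thus ?thesis using a by simp
    qed
  qed
qed

lemma flow:
  "(\<Sum>t<M. fl N X Y a t) = 1"
proof -
  define G where "G x = (x - a + N - 1) div N" for x
  have step: "fl N X Y a t = G (X (Suc t)) - G (X t)" if t: "t < M" for t
  proof -
    from unit_cases[OF steps[rule_format, OF t]]
    show ?thesis
    proof (elim disjE conjE)
      assume "X (Suc t) - X t = 1" "Y (Suc t) - Y t = 0"
      hence e: "X (Suc t) = X t + 1" "Y (Suc t) = Y t" by auto
      have g: "G (X t + 1) = G (X t) + (if (X t - a) mod N = 0 then 1 else 0)"
      proof -
        have q: "X t + 1 - a + N - 1 = (X t - a + N - 1) + 1" by simp
        have "G (X t + 1) = ((X t - a + N - 1) + 1) div N" by (simp only: G_def q)
        also have "\<dots> = G (X t) + (if ((X t - a + N - 1) + 1) mod N = 0 then 1 else 0)"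
          unfolding G_def by (rule divstep[OF Npos])
        also have "((X t - a + N - 1) + 1) mod N = (X t - a) mod N"
        proof -
          have "(X t - a + N - 1) + 1 = (X t - a) + N" by simp
          thus ?thesis by (simp only: mod_add_self2)
        qed
        finally show ?thesis .
      qed
      show ?thesis unfolding fl_def e g by simp
    next
      assume "X (Suc t) - X t = -1" "Y (Suc t) - Y t = 0"
      hence e: "X (Suc t) = X t - 1" "Y (Suc t) = Y t" by auto
      have g: "G (X t) = G (X t - 1) + (if (X t - 1 - a) mod N = 0 then 1 else 0)"
      proof -
        have q: "X t - a + N - 1 = (X t - 1 - a + N - 1) + 1" by simp
        have "G (X t) = ((X t - 1 - a + N - 1) + 1) div N" by (simp only: G_def q)
        also have "\<dots> = G (X t - 1) + (if ((X t - 1 - a + N - 1) + 1) mod N = 0 then 1 else 0)"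
          unfolding G_def by (rule divstep[OF Npos])
        also have "((X t - 1 - a + N - 1) + 1) mod N = (X t - 1 - a) mod N"
        proof -
          have "(X t - 1 - a + N - 1) + 1 = (X t - 1 - a) + N" by simp
          thus ?thesis by (simp only: mod_add_self2)
        qed
        finally show ?thesis .
      qed
      show ?thesis unfolding fl_def e g by simp
    next
      assume "X (Suc t) - X t = 0" "Y (Suc t) - Y t = 1"
      hence e: "X (Suc t) = X t" "Y (Suc t) = Y t + 1" by auto
      show ?thesis unfolding fl_def e by simp
    next
      assume "X (Suc t) - X t = 0" "Y (Suc t) - Y t = -1"
      hence e: "X (Suc t) = X t" "Y (Suc t) = Y t - 1" by auto
      show ?thesis unfolding fl_def e by simp
    qed
  qed
  have "(\<Sum>t<M. fl N X Y a t) = (\<Sum>t<M. G (X (Suc t)) - G (X t))"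
    using step by (intro sum.cong) auto
  also have "\<dots> = G (X M) - G (X 0)" by (rule sum_lessThan_telescope)
  also have "G (X M) = G (X 0) + 1"
  proof -
    have e2: "X M - a + N - 1 = (X 0 - a + N - 1) + N" using closeX by simp
    have "G (X M) = ((X 0 - a + N - 1) + N) div N" by (simp only: G_def e2)
    also have "\<dots> = (X 0 - a + N - 1) div N + 1" using Npos by (simp only: div_add_self2)
    finally show ?thesis unfolding G_def .
  qed
  finally show ?thesis by simp
qed

lemma HH_bot:
  assumes low: "\<forall>t<M. Y t \<ge> b" and off: "offp N X Y M a b"
  shows "HH N X Y M a b = 1"
proof -
  have "HH N X Y M a b = (\<Sum>t<M. fl N X Y a t)"
    unfolding HH_def
  proof (rule sum.cong[OF refl])
    fix t assume "t \<in> {..<M}"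
    hence t: "t < M" by simp
    have n1: "\<not> (Y t = b \<and> (X t - a) mod N = 0)" using off t unfolding offp_def by auto
    have n2: "\<not> (Y (Suc t) = b \<and> (X (Suc t) - a) mod N = 0)" using on_suc[OF t] off by auto
    have "Y t \<ge> b" using low t by simp
    show "hc N X Y a b t = fl N X Y a t"
    proof (cases "Y t = b")
      case False
      hence "Y t > b" using \<open>Y t \<ge> b\<close> by simp
      thus ?thesis unfolding hc_def fl_def by simp
    next
      case True
      have "\<not> (X (Suc t) = X t + 1 \<and> Y (Suc t) = Y t \<and> (X t - a) mod N = 0)" using n1 True by auto
      moreover have "\<not> (X (Suc t) = X t - 1 \<and> Y (Suc t) = Y t \<and> (X (Suc t) - a) mod N = 0)" using n2 True by metis
      ultimately show ?thesis unfolding hc_def fl_def using True by simp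
    qed
  qed
  thus ?thesis using flow by simp
qed

lemma HH_step:
  assumes u: "\<bar>u2 - u1\<bar> + \<bar>v2 - v1\<bar> = 1" and o1: "offp N X Y M u1 v1" and o2: "offp N X Y M u2 v2"
  shows "HH N X Y M u1 v1 = HH N X Y M u2 v2"
proof -
  have "(u2 = u1 + 1 \<and> v2 = v1) \<or> (u1 = u2 + 1 \<and> v2 = v1) \<or> (u2 = u1 \<and> v2 = v1 + 1) \<or> (u2 = u1 \<and> v1 = v2 + 1)"
    using unit_cases[OF u] by linarith
  thus ?thesis
  proof (elim disjE conjE)
    assume R: "u2 = u1 + 1" "v2 = v1"
    have "offp N X Y M (u1+1) v1" using o2 R by simp
    from horiz[OF this] show ?thesis using R by simp
  next
    assume L: "u1 = u2 + 1" "v2 = v1"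
    have "offp N X Y M (u2+1) v2" using o1 L by simp
    from horiz[OF this] show ?thesis using L by simp
  next
    assume U: "u2 = u1" "v2 = v1 + 1"
    have "offp N X Y M u1 (v1+1)" using o2 U by simp
    from vert[OF this] show ?thesis using U by simp
  next
    assume D: "u2 = u1" "v1 = v2 + 1"
    have "offp N X Y M u2 (v2+1)" using o1 D by simp
    from vert[OF this] show ?thesis using D by simp
  qed
qed


lemma negmod: "(- (a::int)) mod N = 0 \<Longrightarrow> a mod N = 0"
  by (simp add: mod_eq_0_iff_dvd)

lemma chain_nat:
  assumes "\<And>i. lo \<le> i \<Longrightarrow> i < hi \<Longrightarrow> f i = f (Suc i)" "lo \<le> t" "t \<le> hi"
  shows "f t = f lo"
  using assms(2,3)
proof (induction t)
  case 0 thus ?case by simp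
next
  case (Suc t)
  show ?case
  proof (cases "lo \<le> t")
    case True
    hence "f t = f lo" using Suc by simp
    moreover have "f t = f (Suc t)" using assms(1)[of t] True Suc.prems by simp
    ultimately show ?thesis by simp
  next
    case False
    hence "lo = Suc t" using Suc.prems by simp
    thus ?thesis by simp
  qed
qed

lemma two_on:
  assumes a: "a mod N \<noteq> 0"
  shows "card {t. t < M \<and> \<not> offp N X Y M (X t + a) (Y t)} \<ge> 2"
proof (rule ccontr)
  define Q where "Q = {t. t < M \<and> \<not> offp N X Y M (X t + a) (Y t)}"
  define off where "off t = offp N X Y M (X t + a) (Y t)" for t
  define g where "g t = HH N X Y M (X t + a) (Y t)" for t
  assume "\<not> 2 \<le> card {t. t < M \<and> \<not> offp N X Y M (X t + a) (Y t)}"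
  hence cQ: "card Q \<le> 1" unfolding Q_def by simp
  have finQ: "finite Q" unfolding Q_def by simp
  have Mpos: "0 < M"
  proof (rule ccontr)
    assume "\<not> 0 < M" hence "M = 0" by simp
    thus False using closeX Npos by simp
  qed
  have offQ: "off t \<longleftrightarrow> t \<notin> Q" if "t < M" for t using that unfolding Q_def off_def by simp
  have imgne: "Y ` {..<M} \<noteq> {}" using Mpos by auto
  define ymax where "ymax = Max (Y ` {..<M})"
  define ymin where "ymin = Min (Y ` {..<M})"
  have ymax_ge: "\<forall>t<M. Y t \<le> ymax" unfolding ymax_def by auto
  have ymin_le: "\<forall>t<M. ymin \<le> Y t" unfolding ymin_def by auto
  have "ymax \<in> Y ` {..<M}" unfolding ymax_def using imgne by (intro Max_in) auto
  then obtain tm where tm: "tm < M" "Y tm = ymax" by auto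
  have "ymin \<in> Y ` {..<M}" unfolding ymin_def using imgne by (intro Min_in) auto
  then obtain tn where tn: "tn < M" "Y tn = ymin" by auto
  have extreme: "\<exists>t. t < M \<and> Y t = c \<and> off t"
    if c: "\<exists>t<M. Y t = c" for c
  proof (rule ccontr)
    assume H: "\<not> (\<exists>t. t < M \<and> Y t = c \<and> off t)"
    define TP where "TP = {t. t < M \<and> Y t = c}"
    have "TP \<subseteq> Q"
    proof
      fix t assume "t \<in> TP"
      hence "t < M" "Y t = c" unfolding TP_def by auto
      hence "\<not> off t" using H by auto
      thus "t \<in> Q" using offQ \<open>t < M\<close> by auto
    qed
    hence cTP: "card TP \<le> 1" using cQ finQ card_mono order_trans by blast
    obtain t0 where t0: "t0 < M" "Y t0 = c" using c by auto
    hence t0TP: "t0 \<in> TP" unfolding TP_def by auto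
    have uniq: "t = t0" if "t \<in> TP" for t
    proof (rule ccontr)
      assume "t \<noteq> t0"
      hence "{t, t0} \<subseteq> TP" using that t0TP by auto
      moreover have "finite TP" unfolding TP_def by simp
      ultimately have "card {t, t0} \<le> card TP" by (rule card_mono[rotated])
      thus False using \<open>t \<noteq> t0\<close> cTP by simp
    qed
    have "\<not> off t0" using H t0 by auto
    then obtain s where s: "s < M" "Y s = Y t0" "(X s - (X t0 + a)) mod N = 0"
      unfolding off_def offp_def by auto
    have "s \<in> TP" using s t0 unfolding TP_def by auto
    hence "s = t0" by (rule uniq)
    hence "N dvd (X t0 - (X t0 + a))" using s(3) by (simp add: mod_eq_0_iff_dvd)
    hence "N dvd a" by simp
    thus False using a by (simp add: mod_eq_0_iff_dvd)
  qed
  obtain t1 where t1: "t1 < M" "Y t1 = ymax" "off t1" using extreme[of ymax] tm by auto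
  obtain t2 where t2: "t2 < M" "Y t2 = ymin" "off t2" using extreme[of ymin] tn by auto
  have g1: "g t1 = 0" unfolding g_def using t1 ymax_ge by (intro HH_top) simp
  have g2: "g t2 = 1" unfolding g_def using t2 ymin_le unfolding off_def by (intro HH_bot) auto
  have gstep: "g i = g (Suc i)" if "i < M" "off i" "off (Suc i)" for i
  proof -
    have "\<bar>(X (Suc i) + a) - (X i + a)\<bar> + \<bar>Y (Suc i) - Y i\<bar> = 1" using steps that(1) by simp
    thus ?thesis unfolding g_def using that(2,3) unfolding off_def by (rule HH_step)
  qed
  have offM: "off M = off 0"
  proof -
    have e: "X M + a = (X 0 + a) + N" using closeX by simp
    show ?thesis unfolding off_def e closeY by (rule offp_per)
  qed
  have gM: "g M = g 0"
  proof -
    have e: "X M + a = (X 0 + a) + N" using closeX by simp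
    show ?thesis unfolding g_def e closeY by (rule HH_per)
  qed
  have all: "\<exists>c. \<forall>t. t < M \<longrightarrow> off t \<longrightarrow> g t = c"
  proof (cases "Q = {}")
    case True
    have ch: "\<And>i. 0 \<le> i \<Longrightarrow> i < M \<Longrightarrow> g i = g (Suc i)"
    proof -
      fix i assume "0 \<le> i" "i < M"
      have "off i" using offQ \<open>i < M\<close> True by simp
      moreover have "off (Suc i)"
      proof (cases "Suc i < M")
        case True thus ?thesis using offQ \<open>Q = {}\<close> by simp
      next
        case False hence "Suc i = M" using \<open>i < M\<close> by simp
        thus ?thesis using offM offQ Mpos \<open>Q = {}\<close> by simp
      qed
      ultimately show "g i = g (Suc i)" using gstep \<open>i < M\<close> by simp
    qed
    show ?thesis
    proof (intro exI allI impI)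
      fix t assume "t < M" "off t"
      thus "g t = g 0" using chain_nat[of 0 M g t, OF ch] by simp
    qed
  next
    case False
    then obtain q where "q \<in> Q" by auto
    have Qq: "Q = {q}"
    proof -
      have "Q \<subseteq> {q}"
      proof
        fix x assume "x \<in> Q"
        show "x \<in> {q}"
        proof (rule ccontr)
          assume "x \<notin> {q}"
          hence "{x, q} \<subseteq> Q" using \<open>x \<in> Q\<close> \<open>q \<in> Q\<close> by auto
          hence "card {x, q} \<le> card Q" using finQ card_mono by blast
          thus False using \<open>x \<notin> {q}\<close> cQ by simp
        qed
      qed
      thus ?thesis using \<open>q \<in> Q\<close> by auto
    qed
    have qM: "q < M" using \<open>q \<in> Q\<close> unfolding Q_def by simp
    have offi: "off i" if "i < M" "i \<noteq> q" for i using offQ that Qq by simp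
    have tq: "t \<noteq> q" if "t < M" "off t" for t using that offQ Qq by auto
    show ?thesis
    proof (cases "q = 0")
      case True
      have ch: "\<And>i. 1 \<le> i \<Longrightarrow> i < M - 1 \<Longrightarrow> g i = g (Suc i)"
        using gstep offi True by simp
      show ?thesis
      proof (intro exI allI impI)
        fix t assume "t < M" "off t"
        have "t \<noteq> 0" using tq[OF \<open>t < M\<close> \<open>off t\<close>] True by simp
        hence "1 \<le> t" "t \<le> M - 1" using \<open>t < M\<close> by auto
        thus "g t = g 1" using chain_nat[of 1 "M - 1" g t, OF ch] by simp
      qed
    next
      case False
      have A: "\<And>i. 0 \<le> i \<Longrightarrow> i < q - 1 \<Longrightarrow> g i = g (Suc i)"
        using gstep offi qM by simp
      have B: "\<And>i. q + 1 \<le> i \<Longrightarrow> i < M \<Longrightarrow> g i = g (Suc i)"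
      proof -
        fix i assume i: "q + 1 \<le> i" "i < M"
        have "off i" using offi i by simp
        moreover have "off (Suc i)"
        proof (cases "Suc i < M")
          case True thus ?thesis using offi i by simp
        next
          case False hence "Suc i = M" using i by simp
          thus ?thesis using offM offi Mpos \<open>q \<noteq> 0\<close> by simp
        qed
        ultimately show "g i = g (Suc i)" using gstep i by simp
      qed
      show ?thesis
      proof (intro exI allI impI)
        fix t assume tt: "t < M" "off t"
        show "g t = g 0"
        proof (cases "t < q")
          case True
          thus ?thesis using chain_nat[of 0 "q - 1" g t, OF A] by simp
        next
          case False
          hence "q + 1 \<le> t" using tq tt by fastforce
          hence "g t = g (q+1)" using chain_nat[of "q+1" M g t, OF B] tt by simp
          moreover have "g M = g (q+1)" using chain_nat[of "q+1" M g M, OF B] qM by simp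
          ultimately show ?thesis using gM by simp
        qed
      qed
    qed
  qed
  have "g t1 = g t2" using all t1 t2 by metis
  thus False using g1 g2 by simp
qed
end


definition walk :: "(nat\<Rightarrow>int) \<Rightarrow> (nat\<Rightarrow>int) \<Rightarrow> nat \<Rightarrow> bool" where
  "walk X Y m \<longleftrightarrow> (\<forall>t<m. \<bar>X (Suc t) - X t\<bar> + \<bar>Y (Suc t) - Y t\<bar> = 1)"

definition chord :: "int \<Rightarrow> (nat\<Rightarrow>int) \<Rightarrow> (nat\<Rightarrow>int) \<Rightarrow> nat \<Rightarrow> bool" where
  "chord d X Y m \<longleftrightarrow> (\<exists>s t. s \<le> m \<and> t \<le> m \<and> X t = X s + d \<and> Y t = Y s)"

lemma loop_erase:
  assumes w: "walk X Y m" and st: "s < t" "t \<le> m" and eq: "X s = X t" "Y s = Y t"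
  shows "\<exists>X' Y' m'. m' < m \<and> walk X' Y' m' \<and> X' 0 = X 0 \<and> Y' 0 = Y 0 \<and> X' m' = X m \<and> Y' m' = Y m
     \<and> (chord d X' Y' m' \<longrightarrow> chord d X Y m)"
proof -
  define m' where "m' = m - (t - s)"
  define f where "f i = (if i \<le> s then i else i + (t - s))" for i
  define X' where "X' i = X (f i)" for i
  define Y' where "Y' i = Y (f i)" for i
  have mm: "m' < m" using st unfolding m'_def by simp
  have fle: "f i \<le> m" if "i \<le> m'" for i using that st unfolding f_def m'_def by auto
  have wk: "walk X' Y' m'"
    unfolding walk_def
  proof (intro allI impI)
    fix i assume i: "i < m'"
    show "\<bar>X' (Suc i) - X' i\<bar> + \<bar>Y' (Suc i) - Y' i\<bar> = 1"
    proof (cases "i < s")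
      case True
      hence "f (Suc i) = Suc i" "f i = i" unfolding f_def by auto
      moreover have "i < m" using True st by simp
      ultimately show ?thesis using w unfolding walk_def X'_def Y'_def by simp
    next
      case False
      show ?thesis
      proof (cases "i = s")
        case True
        hence "f (Suc i) = Suc t" "f i = s" unfolding f_def using st by auto
        moreover have "t < m" using i True st unfolding m'_def by simp
        ultimately show ?thesis using w eq unfolding walk_def X'_def Y'_def by simp
      next
        case False
        hence "f (Suc i) = Suc (i + (t - s))" "f i = i + (t - s)" using \<open>\<not> i < s\<close> unfolding f_def by auto
        moreover have "i + (t - s) < m" using i st unfolding m'_def by simp
        ultimately show ?thesis using w unfolding walk_def X'_def Y'_def by simp
      qed
    qed
  qed
  have e0: "X' 0 = X 0" "Y' 0 = Y 0" unfolding X'_def Y'_def f_def by auto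
  have em: "X' m' = X m \<and> Y' m' = Y m"
  proof (cases "m' \<le> s")
    case True
    hence "m' = s" "t = m" using st unfolding m'_def by auto
    thus ?thesis using eq unfolding X'_def Y'_def f_def by simp
  next
    case False
    hence "f m' = m" using st unfolding f_def m'_def by auto
    thus ?thesis unfolding X'_def Y'_def by simp
  qed
  have ch: "chord d X' Y' m' \<longrightarrow> chord d X Y m"
  proof
    assume "chord d X' Y' m'"
    then obtain a b where ab: "a \<le> m'" "b \<le> m'" "X' b = X' a + d" "Y' b = Y' a" unfolding chord_def by auto
    show "chord d X Y m" unfolding chord_def
      using fle[OF ab(1)] fle[OF ab(2)] ab(3,4) unfolding X'_def Y'_def by blast
  qed
  show ?thesis using mm wk e0 em ch by blast
qed

lemma sub_walk:
  assumes w: "walk X Y m" and st: "s \<le> m" "t \<le> m"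
  shows "\<exists>X' Y'. walk X' Y' (if s \<le> t then t - s else s - t) \<and> X' 0 = 0 \<and> Y' 0 = 0
     \<and> X' (if s \<le> t then t - s else s - t) = X t - X s \<and> Y' (if s \<le> t then t - s else s - t) = Y t - Y s
     \<and> (chord d X' Y' (if s \<le> t then t - s else s - t) \<longrightarrow> chord d X Y m)"
proof (cases "s \<le> t")
  case True
  define X' where "X' i = X (s + i) - X s" for i
  define Y' where "Y' i = Y (s + i) - Y s" for i
  have wk: "walk X' Y' (t - s)" unfolding walk_def
  proof (intro allI impI)
    fix i assume "i < t - s"
    hence "s + i < m" using st by simp
    thus "\<bar>X' (Suc i) - X' i\<bar> + \<bar>Y' (Suc i) - Y' i\<bar> = 1"
      using w unfolding walk_def X'_def Y'_def by simp
  qed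
  have ch: "chord d X' Y' (t - s) \<longrightarrow> chord d X Y m"
  proof
    assume "chord d X' Y' (t - s)"
    then obtain a b where ab: "a \<le> t - s" "b \<le> t - s" "X' b = X' a + d" "Y' b = Y' a" unfolding chord_def by auto
    have "s + a \<le> m" "s + b \<le> m" using ab st by auto
    moreover have "X (s + b) = X (s + a) + d" "Y (s + b) = Y (s + a)" using ab unfolding X'_def Y'_def by auto
    ultimately show "chord d X Y m" unfolding chord_def by blast
  qed
  have e: "X' 0 = 0" "Y' 0 = 0" "X' (t - s) = X t - X s" "Y' (t - s) = Y t - Y s"
    unfolding X'_def Y'_def using True by auto
  show ?thesis using True wk ch e by (intro exI[of _ X'] exI[of _ Y']) simp
next
  case False
  define X' where "X' i = X (s - i) - X s" for i
  define Y' where "Y' i = Y (s - i) - Y s" for i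
  have wk: "walk X' Y' (s - t)" unfolding walk_def
  proof (intro allI impI)
    fix i assume i: "i < s - t"
    hence "s - Suc i < m" "Suc (s - Suc i) = s - i" using st by auto
    hence "\<bar>X (s - i) - X (s - Suc i)\<bar> + \<bar>Y (s - i) - Y (s - Suc i)\<bar> = 1"
      using w unfolding walk_def by metis
    thus "\<bar>X' (Suc i) - X' i\<bar> + \<bar>Y' (Suc i) - Y' i\<bar> = 1"
      unfolding X'_def Y'_def by (simp add: abs_minus_commute)
  qed
  have ch: "chord d X' Y' (s - t) \<longrightarrow> chord d X Y m"
  proof
    assume "chord d X' Y' (s - t)"
    then obtain a b where ab: "a \<le> s - t" "b \<le> s - t" "X' b = X' a + d" "Y' b = Y' a" unfolding chord_def by auto
    have "s - a \<le> m" "s - b \<le> m" using ab st by auto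
    moreover have "X (s - b) = X (s - a) + d" "Y (s - b) = Y (s - a)" using ab unfolding X'_def Y'_def by auto
    ultimately show "chord d X Y m" unfolding chord_def by blast
  qed
  have "s - (s - t) = t" using False by simp
  hence e: "X' 0 = 0" "Y' 0 = 0" "X' (s - t) = X t - X s" "Y' (s - t) = Y t - Y s"
    unfolding X'_def Y'_def by auto
  show ?thesis using False wk ch e by (intro exI[of _ X'] exI[of _ Y']) simp
qed



lemma div2_facts:
  fixes d :: int assumes "d \<ge> 1"
  shows "2 * (d div 2) \<le> d" "d \<le> 2 * ((d + 1) div 2)" "2 * ((d+1) div 2) \<le> d + 1" "0 \<le> d div 2"
proof -
  have "d = 2 * (d div 2) + d mod 2" by simp
  moreover have "0 \<le> d mod 2" "d mod 2 < 2" by auto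
  ultimately show "2 * (d div 2) \<le> d" "0 \<le> d div 2" using assms by linarith+
  have "d + 1 = 2 * ((d + 1) div 2) + (d + 1) mod 2" by simp
  moreover have "0 \<le> (d+1) mod 2" "(d+1) mod 2 < 2" by auto
  ultimately show "d \<le> 2 * ((d + 1) div 2)" "2 * ((d+1) div 2) \<le> d + 1" by linarith+
qed

lemma nz_ck:
  fixes c k j :: int assumes "1 \<le> j" "j \<le> k - 1"
  shows "c * k + j \<noteq> 0"
proof
  assume h: "c * k + j = 0"
  show False
  proof (cases "c \<ge> 0")
    case True
    hence "c * k \<ge> 0" using assms by simp
    thus False using h assms by linarith
  next
    case False
    hence "c \<le> -1" by simp
    hence "c * k \<le> -1 * k" using assms by (intro mult_right_mono) auto
    thus False using h assms by linarith
  qed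
qed

lemma absmul_ge:
  fixes e d :: int assumes "e \<noteq> 0" "d \<ge> 1"
  shows "\<bar>e * d\<bar> \<ge> d"
proof -
  have "\<bar>e * d\<bar> = \<bar>e\<bar> * d" using assms by (simp add: abs_mult)
  moreover have "\<bar>e\<bar> * d \<ge> 1 * d" using assms by (intro mult_right_mono) auto
  ultimately show ?thesis by simp
qed

lemma same_j:
  fixes c k j j' :: int assumes "1 \<le> j" "j \<le> k - 1" "1 \<le> j'" "j' \<le> k - 1" "c * k + j - j' = 0"
  shows "j = j'"
proof (rule ccontr)
  assume "j \<noteq> j'"
  hence "c \<noteq> 0" using assms by auto
  hence "\<bar>c * k\<bar> \<ge> k" using absmul_ge[of c k] assms by simp
  moreover have "c * k = j' - j" using assms by simp
  ultimately show False using assms by linarith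
qed


theorem aux_main:
  fixes d :: int assumes d1: "d \<ge> 1"
  shows "\<forall>X Y k r h. walk X Y m \<longrightarrow> X 0 = 0 \<longrightarrow> Y 0 = 0 \<longrightarrow> X m = k*d + r \<longrightarrow> Y m = h
     \<longrightarrow> -(d div 2) \<le> r \<longrightarrow> r \<le> (d+1) div 2 - 1 \<longrightarrow> \<bar>r\<bar> + \<bar>h\<bar> + 1 \<le> k \<longrightarrow> chord d X Y m"
proof (induction m rule: less_induct)
  case (less m)
  show ?case
  proof (intro allI impI)
    fix X Y k r h
    assume w: "walk X Y m" and x0: "X 0 = 0" and y0: "Y 0 = 0" and xm: "X m = k*d + r" and ym: "Y m = h"
      and r1: "-(d div 2) \<le> r" and r2: "r \<le> (d+1) div 2 - 1" and kk: "\<bar>r\<bar> + \<bar>h\<bar> + 1 \<le> k"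
    note df = div2_facts[OF d1]
    have rd: "\<bar>r\<bar> < d" using r1 r2 df d1 by linarith
    have k1: "k \<ge> 1" using kk by simp
    have kd: "k * d \<ge> d" using k1 d1 mult_right_mono[of 1 k d] by simp
    have pos: "k * d + r > 0" using kd r1 df d1 by linarith
    have r0: "r = 0" if "d dvd r"
    proof (rule ccontr)
      assume "r \<noteq> 0"
      hence "\<bar>d\<bar> \<le> \<bar>r\<bar>" using that dvd_imp_le_int by blast
      thus False using rd d1 by simp
    qed
    show "chord d X Y m"
    proof (rule ccontr)
      assume nch: "\<not> chord d X Y m"
      have IHapp: "chord d X' Y' m'" if "m' < m" "walk X' Y' m'" "X' 0 = 0" "Y' 0 = 0" "X' m' = k'*d + r'" "Y' m' = h'"
        "-(d div 2) \<le> r'" "r' \<le> (d+1) div 2 - 1" "\<bar>r'\<bar> + \<bar>h'\<bar> + 1 \<le> k'" for X' Y' m' k' r' h'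
        using less.IH[OF that(1)] that(2-9) by blast
      have inj: "s = t" if st: "s \<le> m" "t \<le> m" "X s = X t" "Y s = Y t" for s t
      proof (rule ccontr)
        assume "s \<noteq> t"
        have "\<exists>X' Y' m'. m' < m \<and> walk X' Y' m' \<and> X' 0 = X 0 \<and> Y' 0 = Y 0 \<and> X' m' = X m \<and> Y' m' = Y m
          \<and> (chord d X' Y' m' \<longrightarrow> chord d X Y m)"
        proof (cases "s < t")
          case True thus ?thesis using loop_erase[OF w True st(2) st(3,4)] by blast
        next
          case False hence "t < s" using \<open>s \<noteq> t\<close> by simp
          thus ?thesis using loop_erase[OF w \<open>t < s\<close> st(1)] st(3,4) by simp
        qed
        then obtain X' Y' m' where "m' < m" "walk X' Y' m'" "X' 0 = X 0" "Y' 0 = Y 0" "X' m' = X m" "Y' m' = Y m"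
          "chord d X' Y' m' \<longrightarrow> chord d X Y m" by blast
        moreover have "chord d X' Y' m'"
          using IHapp[of m' X' Y' k r h] calculation x0 y0 xm ym r1 r2 kk by simp
        ultimately show False using nch by simp
      qed
      have nc: "s = 0 \<and> t = m" if st: "s \<le> m" "t \<le> m" "1 \<le> l" "X t - X s = l*d" "Y t = Y s" for s t l
      proof (rule ccontr)
        assume nst: "\<not> (s = 0 \<and> t = m)"
        define m' where "m' = (if s \<le> t then t - s else s - t)"
        obtain X' Y' where sw: "walk X' Y' m'" "X' 0 = 0" "Y' 0 = 0" "X' m' = X t - X s" "Y' m' = Y t - Y s"
          "chord d X' Y' m' \<longrightarrow> chord d X Y m"
          using sub_walk[OF w st(1,2), of d] unfolding m'_def[symmetric] by blast
        have ld: "l * d \<ge> d" using st(3) d1 mult_right_mono[of 1 l d] by simp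
        have "m' < m"
        proof (cases "s \<le> t")
          case True
          have "s \<noteq> t" using st(4) ld d1 by auto
          thus ?thesis using True nst st unfolding m'_def by auto
        next
          case False
          have "\<not> (s = m \<and> t = 0)"
          proof
            assume "s = m \<and> t = 0"
            hence "X 0 - X m = l * d" using st by simp
            thus False using x0 xm pos ld d1 by simp
          qed
          thus ?thesis using False st unfolding m'_def by auto
        qed
        moreover have "0 < (d+1) div 2" using df d1 by linarith
        moreover have "chord d X' Y' m'"
          using IHapp[of m' X' Y' l 0 0] calculation sw st df by simp
        ultimately show False using sw nch by simp
      qed
      show False
      proof (cases "r = 0 \<and> h = 0")
        case True
        hence xm': "X m = k * d" and ym': "Y m = 0" using xm ym by auto
        show False
        proof (cases "k = 1")
          case True
          have "chord d X Y m" unfolding chord_def using xm' ym' x0 y0 True by (intro exI[of _ 0] exI[of _ m]) simp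
          thus False using nch by simp
        next
          case False
          hence k2: "k \<ge> 2" using k1 by simp
          have kdp: "k * d > d" using k2 d1 mult_strict_right_mono[of 1 k d] by simp
          interpret C: cyl "k*d" X Y m
            using w x0 y0 xm' ym' kdp d1 unfolding walk_def by unfold_locales auto
          have "d mod (k*d) = d" using kdp d1 by (simp add: mod_pos_pos_trivial)
          hence "d mod (k*d) \<noteq> 0" using d1 by simp
          from C.two_on[OF this]
          have "{t. t < m \<and> \<not> offp (k*d) X Y m (X t + d) (Y t)} \<noteq> {}" by (metis card.empty not_numeral_le_zero)
          then obtain t where t: "t < m" "\<not> offp (k*d) X Y m (X t + d) (Y t)" by auto
          then obtain s where s: "s < m" "Y s = Y t" "(X s - (X t + d)) mod (k*d) = 0" unfolding offp_def by auto
          hence "k * d dvd (X s - (X t + d))" by (simp add: mod_eq_0_iff_dvd)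
          then obtain c where c: "X s - (X t + d) = k * d * c" by (auto elim: dvdE)
          hence xs: "X s - X t = (c * k + 1) * d" by (simp add: algebra_simps)
          have "c * k + 1 \<noteq> 0" using nz_ck[of 1 k c] k2 by simp
          show False
          proof (cases "c * k + 1 \<ge> 1")
            case True
            from nc[of t s "c*k+1"] t s xs True show False by simp
          next
            case False
            hence "-(c*k+1) \<ge> 1" using \<open>c * k + 1 \<noteq> 0\<close> by simp
            moreover have "X t - X s = (-(c*k+1)) * d" using xs by (simp add: algebra_simps)
            ultimately show False using nc[of s t "-(c*k+1)"] t s by simp
          qed
        qed
      next
        case False
        hence rh: "\<bar>r\<bar> + \<bar>h\<bar> \<ge> 1" by auto
        define L where "L = nat (\<bar>r\<bar> + \<bar>h\<bar>)"
        have L1: "L \<ge> 1" and Lint: "int L = \<bar>r\<bar> + \<bar>h\<bar>" using rh unfolding L_def by auto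
        have k2: "k \<ge> 2" using kk rh by simp
        define TX where "TX i = k*d + r - sgn r * min (int i) \<bar>r\<bar>" for i :: nat
        define TY where "TY i = h - sgn h * max 0 (int i - \<bar>r\<bar>)" for i :: nat
        define M where "M = m + L"
        define WX where "WX t = (if t \<le> m then X t else TX (t - m))" for t
        define WY where "WY t = (if t \<le> m then Y t else TY (t - m))" for t
        have TX0: "TX 0 = X m" "TY 0 = Y m" unfolding TX_def TY_def using xm ym by auto
        have WXT: "WX t = TX (t - m)" "WY t = TY (t - m)" if "m \<le> t" for t
          using that TX0 unfolding WX_def WY_def by auto
        have WXP: "WX t = X t" "WY t = Y t" if "t \<le> m" for t using that unfolding WX_def WY_def by auto
        have TXL: "TX L = k * d" "TY L = 0"
        proof -
          have "min (int L) \<bar>r\<bar> = \<bar>r\<bar>" using Lint by simp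
          thus "TX L = k * d" unfolding TX_def by (simp add: sgn_mult_abs)
          have "max 0 (int L - \<bar>r\<bar>) = \<bar>h\<bar>" using Lint by simp
          thus "TY L = 0" unfolding TY_def by (simp add: sgn_mult_abs)
        qed
        have Tstep: "\<bar>TX (Suc i) - TX i\<bar> + \<bar>TY (Suc i) - TY i\<bar> = 1" if i: "i < L" for i
        proof (cases "int i < \<bar>r\<bar>")
          case True
          have "r \<noteq> 0" using True by auto
          hence "\<bar>sgn r\<bar> = 1" by (simp add: abs_sgn_eq)
          have m1: "min (int (Suc i)) \<bar>r\<bar> = int i + 1" "min (int i) \<bar>r\<bar> = int i" using True by auto
          have m2: "max 0 (int (Suc i) - \<bar>r\<bar>) = 0" "max 0 (int i - \<bar>r\<bar>) = 0" using True by auto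
          have "TX (Suc i) - TX i = (k*d + r - sgn r * (int i + 1)) - (k*d + r - sgn r * int i)"
            by (simp only: TX_def m1)
          also have "\<dots> = - sgn r" by (simp add: algebra_simps)
          finally have "TX (Suc i) - TX i = - sgn r" .
          moreover have "TY (Suc i) - TY i = 0" unfolding TY_def m2 by simp
          ultimately show ?thesis using \<open>\<bar>sgn r\<bar> = 1\<close> by simp
        next
          case False
          have "h \<noteq> 0" using False i Lint by auto
          hence "\<bar>sgn h\<bar> = 1" by (simp add: abs_sgn_eq)
          have m1: "min (int (Suc i)) \<bar>r\<bar> = \<bar>r\<bar>" "min (int i) \<bar>r\<bar> = \<bar>r\<bar>" using False by auto
          have m2: "max 0 (int (Suc i) - \<bar>r\<bar>) = int i - \<bar>r\<bar> + 1" "max 0 (int i - \<bar>r\<bar>) = int i - \<bar>r\<bar>" using False by auto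
          have "TX (Suc i) - TX i = 0" unfolding TX_def m1 by simp
          moreover have "TY (Suc i) - TY i = (h - sgn h * (int i - \<bar>r\<bar> + 1)) - (h - sgn h * (int i - \<bar>r\<bar>))"
            by (simp only: TY_def m2)
          moreover have "(h - sgn h * (int i - \<bar>r\<bar> + 1)) - (h - sgn h * (int i - \<bar>r\<bar>)) = - sgn h" by (simp add: algebra_simps)
          ultimately have "TX (Suc i) - TX i = 0" "TY (Suc i) - TY i = - sgn h" by simp_all
          thus ?thesis using \<open>\<bar>sgn h\<bar> = 1\<close> by simp
        qed
        have Trange: "\<bar>TX i - TX i'\<bar> \<le> \<bar>r\<bar>" for i i'
        proof (cases "r \<ge> 0")
          case True
          have a: "TX i = k*d + r - min (int i) r" "TX i' = k*d + r - min (int i') r"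
            unfolding TX_def using True by (auto simp: sgn_if)
          have "0 \<le> min (int i) r" "min (int i) r \<le> r" "0 \<le> min (int i') r" "min (int i') r \<le> r" using True by auto
          thus ?thesis unfolding a using True by linarith
        next
          case False
          have a: "TX i = k*d + r + min (int i) (-r)" "TX i' = k*d + r + min (int i') (-r)"
            unfolding TX_def using False by (auto simp: sgn_if)
          have "0 \<le> min (int i) (-r)" "min (int i) (-r) \<le> -r" "0 \<le> min (int i') (-r)" "min (int i') (-r) \<le> -r" using False by auto
          thus ?thesis unfolding a using False by linarith
        qed
        have kdp: "k * d > 0" using kd d1 by simp
        interpret C: cyl "k*d" WX WY M
        proof
          show "0 < k * d" by (rule kdp)
          show "\<forall>t<M. \<bar>WX (Suc t) - WX t\<bar> + \<bar>WY (Suc t) - WY t\<bar> = 1"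
          proof (intro allI impI)
            fix t assume tM: "t < M"
            show "\<bar>WX (Suc t) - WX t\<bar> + \<bar>WY (Suc t) - WY t\<bar> = 1"
            proof (cases "t < m")
              case True
              thus ?thesis using WXP[of t] WXP[of "Suc t"] w unfolding walk_def by simp
            next
              case False
              hence "m \<le> t" "m \<le> Suc t" "Suc t - m = Suc (t - m)" "t - m < L" using tM unfolding M_def by auto
              thus ?thesis using WXT[of t] WXT[of "Suc t"] Tstep[of "t - m"] by simp
            qed
          qed
          have "M \<ge> m" unfolding M_def by simp
          moreover have "M - m = L" unfolding M_def by simp
          ultimately show "WX M = WX 0 + k * d" "WY M = WY 0"
            using WXT[of M] WXP[of 0] TXL x0 y0 by auto
        qed
        have noP: False if "s \<le> m" "t \<le> m" "l \<noteq> 0" "X s - X t = l*d" "Y s = Y t" for s t l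
        proof (cases "l \<ge> 1")
          case True
          hence "t = 0 \<and> s = m" using nc[of t s l] that by simp
          hence "k * d + r = l * d" "h = 0" using that x0 xm y0 ym by auto
          hence "r = (l - k) * d" by (simp add: algebra_simps)
          hence "r = 0" using r0 by simp
          thus False using \<open>h = 0\<close> \<open>\<not> (r = 0 \<and> h = 0)\<close> by simp
        next
          case False
          hence "-l \<ge> 1" using that by simp
          moreover have "X t - X s = (-l) * d" using that by (simp add: algebra_simps)
          ultimately have "s = 0 \<and> t = m" using nc[of s t "-l"] that by simp
          hence "k * d + r = (-l) * d" "h = 0" using that x0 xm y0 ym by (auto simp: algebra_simps)
          hence "r = (-l - k) * d" by (simp add: algebra_simps)
          hence "r = 0" using r0 by simp
          thus False using \<open>h = 0\<close> \<open>\<not> (r = 0 \<and> h = 0)\<close> by simp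
        qed
        have noT: False if "m < s" "m < t" "e \<noteq> 0" "WX s - WX t = e*d" for s t e
        proof -
          have "WX s - WX t = TX (s - m) - TX (t - m)" using WXT that by simp
          hence "\<bar>e * d\<bar> \<le> \<bar>r\<bar>" using Trange that by metis
          thus False using absmul_ge[OF that(3) d1] rd by simp
        qed
        have modc: "\<exists>c. WX s - WX t = (c * k + j) * d" if "(WX s - (WX t + j * d)) mod (k * d) = 0" for s t j
        proof -
          have "k * d dvd (WX s - (WX t + j * d))" using that by (simp add: mod_eq_0_iff_dvd)
          then obtain c where "WX s - (WX t + j * d) = k * d * c" by (auto elim: dvdE)
          hence "WX s - WX t = (c * k + j) * d" by (simp add: algebra_simps)
          thus ?thesis by blast
        qed
        define Q where "Q j = {t. t < M \<and> \<not> offp (k*d) WX WY M (WX t + j*d) (WY t)}" for j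
        have finQ: "finite (Q j)" for j unfolding Q_def by simp
        have Qc: "card (Q j) \<ge> 2" if j: "1 \<le> j" "j \<le> k - 1" for j
        proof -
          have "j * d < k * d" using j d1 by (intro mult_strict_right_mono) auto
          moreover have "j * d \<ge> d" using j d1 mult_right_mono[of 1 j d] by simp
          ultimately have "(j*d) mod (k*d) = j*d" using d1 by (simp add: mod_pos_pos_trivial)
          hence "(j*d) mod (k*d) \<noteq> 0" using \<open>j * d \<ge> d\<close> d1 by simp
          from C.two_on[OF this] show ?thesis unfolding Q_def by simp
        qed
        define A where "A = Sigma {1..k-1} Q"
        have cardA: "card A = (\<Sum>j\<in>{1..k-1}. card (Q j))" unfolding A_def using finQ by simp
        also have "\<dots> \<ge> (\<Sum>j\<in>{1..k-1}. 2)" using Qc by (intro sum_mono) auto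
        finally have cA: "card A \<ge> 2 * nat (k - 1)" by simp
        define wit where "wit j t = (SOME s. s < M \<and> WY s = WY t \<and> (WX s - (WX t + j*d)) mod (k*d) = 0)" for j t
        have witp: "wit j t < M \<and> WY (wit j t) = WY t \<and> (WX (wit j t) - (WX t + j*d)) mod (k*d) = 0"
          if "t \<in> Q j" for j t
        proof -
          have "\<exists>s. s < M \<and> WY s = WY t \<and> (WX s - (WX t + j*d)) mod (k*d) = 0"
            using that unfolding Q_def offp_def by auto
          thus ?thesis unfolding wit_def by (rule someI_ex)
        qed
        have witc: "\<exists>c. WX (wit j t) - WX t = (c * k + j) * d" if "t \<in> Q j" for j t
          by (rule modc[OF conjunct2[OF conjunct2[OF witp[OF that]]]])
        have cross: False if "e \<noteq> 0" "WX u - WX v = e * d" "WY u = WY v" "u \<le> m" "v \<le> m" for u v e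
          using noP[of u v e] that WXP by simp
        have crossT: False if "e \<noteq> 0" "WX u - WX v = e * d" "m < u" "m < v" for u v e
          using noT[of u v e] that by simp
        define phi where "phi p = (if snd p \<le> m then (wit (fst p) (snd p), 0::nat) else (snd p, 1::nat))" for p :: "int \<times> nat"
        define B where "B = {m+1..<M} \<times> {0::nat, 1}"
        have memA: "1 \<le> j \<and> j \<le> k - 1 \<and> t \<in> Q j" if "(j, t) \<in> A" for j t using that unfolding A_def by auto
        have witgt: "m < wit j t" if "(j, t) \<in> A" "t \<le> m" for j t
        proof (rule ccontr)
          assume "\<not> m < wit j t"
          hence sm: "wit j t \<le> m" by simp
          from memA[OF that(1)] have j: "1 \<le> j" "j \<le> k - 1" "t \<in> Q j" by auto
          from witc[OF j(3)] obtain c where c: "WX (wit j t) - WX t = (c * k + j) * d" by (elim exE)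
          show False using cross[OF nz_ck[OF j(1,2)] c] witp[OF j(3)] sm that(2) by simp
        qed
        have img: "phi ` A \<subseteq> B"
        proof
          fix y assume "y \<in> phi ` A"
          then obtain j t where jt: "(j, t) \<in> A" "y = phi (j, t)" by auto
          have tM: "t < M" using memA[OF jt(1)] unfolding Q_def by simp
          show "y \<in> B"
          proof (cases "t \<le> m")
            case True
            thus ?thesis using witgt[OF jt(1) True] witp memA[OF jt(1)] jt(2) unfolding phi_def B_def by auto
          next
            case False
            thus ?thesis using tM jt(2) unfolding phi_def B_def by auto
          qed
        qed
        have injphi: "inj_on phi A"
        proof (rule inj_onI)
          fix p p' assume pA: "p \<in> A" "p' \<in> A" and eq: "phi p = phi p'"
          obtain j t where p: "p = (j, t)" by (cases p)
          obtain j' t' where p': "p' = (j', t')" by (cases p')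
          have j: "1 \<le> j" "j \<le> k - 1" "t \<in> Q j" using memA pA(1) p by auto
          have j': "1 \<le> j'" "j' \<le> k - 1" "t' \<in> Q j'" using memA pA(2) p' by auto
          show "p = p'"
          proof (cases "t \<le> m")
            case True
            have t'm: "t' \<le> m"
            proof (rule ccontr)
              assume "\<not> t' \<le> m" thus False using eq True unfolding p p' phi_def by simp
            qed
            have ws: "wit j t = wit j' t'" using eq True t'm unfolding p p' phi_def by simp
            from witc[OF j(3)] obtain c where c: "WX (wit j t) - WX t = (c * k + j) * d" by (elim exE)
            from witc[OF j'(3)] obtain c' where c': "WX (wit j' t') - WX t' = (c' * k + j') * d" by (elim exE)
            have dd: "WX t' - WX t = ((c - c') * k + j - j') * d" using c c' ws by (simp add: algebra_simps)
            have yy: "WY t' = WY t" using witp[OF j(3)] witp[OF j'(3)] ws by simp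
            have e0: "(c - c') * k + j - j' = 0"
            proof (rule ccontr)
              assume "(c - c') * k + j - j' \<noteq> 0"
              thus False using cross[OF _ dd yy t'm True] by simp
            qed
            hence "j = j'" using same_j[OF j(1,2) j'(1,2) e0] by simp
            have "WX t' = WX t" using dd unfolding e0 by simp
            hence "t' = t" using inj[of t' t] yy WXP t'm True by simp
            thus ?thesis using p p' \<open>j = j'\<close> by simp
          next
            case False
            have t'm: "\<not> t' \<le> m"
            proof
              assume "t' \<le> m" thus False using eq False unfolding p p' phi_def by simp
            qed
            have tt: "t = t'" using eq False t'm unfolding p p' phi_def by simp
            have sle: "wit i t \<le> m" if "t \<in> Q i" "1 \<le> i" "i \<le> k - 1" for i
            proof (rule ccontr)
              assume "\<not> wit i t \<le> m"
              from witc[OF that(1)] obtain c where c: "WX (wit i t) - WX t = (c * k + i) * d" by (elim exE)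
              show False using crossT[OF nz_ck[OF that(2,3)] c] \<open>\<not> wit i t \<le> m\<close> False by simp
            qed
            have s1: "wit j t \<le> m" using sle j by simp
            have s2: "wit j' t \<le> m" using sle j' tt by simp
            from witc[OF j(3)] obtain c where c: "WX (wit j t) - WX t = (c * k + j) * d" by (elim exE)
            have j'3: "t \<in> Q j'" using j'(3) tt by simp
            from witc[OF j'3] obtain c' where c': "WX (wit j' t) - WX t = (c' * k + j') * d" by (elim exE)
            have dd: "WX (wit j t) - WX (wit j' t) = ((c - c') * k + j - j') * d" using c c' by (simp add: algebra_simps)
            have yy: "WY (wit j t) = WY (wit j' t)" using witp[OF j(3)] witp[OF j'3] by simp
            have e0: "(c - c') * k + j - j' = 0"
            proof (rule ccontr)
              assume "(c - c') * k + j - j' \<noteq> 0"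
              thus False using cross[OF _ dd yy s1 s2] by simp
            qed
            hence "j = j'" using same_j[OF j(1,2) j'(1,2) e0] by simp
            thus ?thesis using p p' tt by simp
          qed
        qed
        have "card A \<le> card B" using card_inj_on_le[OF injphi img] unfolding B_def by simp
        also have "card B = (M - Suc m) * 2" unfolding B_def by (simp add: card_cartesian_product)
        also have "M - Suc m = L - 1" unfolding M_def by simp
        finally have "2 * nat (k - 1) \<le> (L - 1) * 2" using cA by linarith
        hence "nat (k - 1) \<le> L - 1" by simp
        thus False using kk Lint L1 by linarith

      qed
    qed
  qed
qed

lemma cdiv_unique:
  fixes n d k1 r1 k2 r2 :: int
  assumes d1: "d \<ge> 1"
    and p1: "n = k1 * d + r1" "- (d div 2) \<le> r1" "r1 \<le> (d + 1) div 2 - 1"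
    and p2: "n = k2 * d + r2" "- (d div 2) \<le> r2" "r2 \<le> (d + 1) div 2 - 1"
  shows "k1 = k2"
proof (rule ccontr)
  assume "k1 \<noteq> k2"
  hence "k1 - k2 \<noteq> 0" by simp
  from absmul_ge[OF this d1] have "\<bar>(k1 - k2) * d\<bar> \<ge> d" .
  moreover have "(k1 - k2) * d = r2 - r1" using p1 p2 by (simp add: algebra_simps)
  moreover have "(d + 1) div 2 + d div 2 = d" by presburger
  ultimately show False using p1 p2 by linarith
qed

lemma cdiv_props:
  fixes n d :: int assumes d1: "d \<ge> 1"
  shows "n = cdiv_k n d * d + cdiv_r n d" "- (d div 2) \<le> cdiv_r n d" "cdiv_r n d \<le> (d + 1) div 2 - 1"
proof -
  define P where "P k r \<longleftrightarrow> n = k * d + r \<and> - (d div 2) \<le> r \<and> r \<le> (d + 1) div 2 - 1" for k r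
  define k0 where "k0 = (n + d div 2) div d"
  define r0 where "r0 = n - k0 * d"
  have hd: "(d + 1) div 2 + d div 2 = d" by presburger
  have "r0 = (n + d div 2) mod d - d div 2"
  proof -
    have "n + d div 2 = k0 * d + (n + d div 2) mod d" unfolding k0_def by simp
    thus ?thesis unfolding r0_def by simp
  qed
  moreover have "0 \<le> (n + d div 2) mod d" "(n + d div 2) mod d < d" using d1 by auto
  ultimately have P0: "P k0 r0" unfolding P_def r0_def using hd by auto
  have uk: "k1 = k2" if "P k1 r1" "P k2 r2" for k1 k2 r1 r2
    using cdiv_unique[OF d1, of n k1 r1 k2 r2] that unfolding P_def by blast
  have ex1k: "\<exists>!k. \<exists>r. P k r"
  proof
    show "\<exists>r. P k0 r" using P0 by blast
    fix k assume "\<exists>r. P k r" thus "k = k0" using uk P0 by blast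
  qed
  have ex1r: "\<exists>!r. \<exists>k. P k r"
  proof
    show "\<exists>k. P k r0" using P0 by blast
    fix r assume "\<exists>k. P k r"
    then obtain k where "P k r" by blast
    hence "k = k0" using uk P0 by blast
    thus "r = r0" using \<open>P k r\<close> unfolding P_def r0_def by simp
  qed
  have K: "cdiv_k n d = k0"
    unfolding cdiv_k_def P_def[symmetric] using ex1k P0 by (intro the1_equality) blast+
  have R: "cdiv_r n d = r0"
    unfolding cdiv_r_def P_def[symmetric] using ex1r P0 by (intro the1_equality) blast+
  show "n = cdiv_k n d * d + cdiv_r n d" "- (d div 2) \<le> cdiv_r n d" "cdiv_r n d \<le> (d + 1) div 2 - 1"
    using P0 unfolding K R P_def by auto
qed

lemma int_sq_unit:
  fixes a b :: int assumes "a * a + b * b = 1"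
  shows "\<bar>a\<bar> + \<bar>b\<bar> = 1"
proof -
  have "a * a = \<bar>a\<bar> * \<bar>a\<bar>" "b * b = \<bar>b\<bar> * \<bar>b\<bar>" by (simp_all add: abs_mult_self_eq)
  hence e: "\<bar>a\<bar> * \<bar>a\<bar> + \<bar>b\<bar> * \<bar>b\<bar> = 1" using assms by simp
  have ge: "\<bar>x\<bar> * \<bar>x\<bar> \<ge> \<bar>x\<bar>" for x :: int
  proof (cases "x = 0")
    case False hence "\<bar>x\<bar> \<ge> 1" by simp
    thus ?thesis using mult_right_mono[of 1 "\<bar>x\<bar>" "\<bar>x\<bar>"] by simp
  qed simp
  have "\<bar>a\<bar> + \<bar>b\<bar> \<le> 1" using ge[of a] ge[of b] e by linarith
  moreover have "\<bar>a\<bar> + \<bar>b\<bar> \<noteq> 0"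
  proof
    assume "\<bar>a\<bar> + \<bar>b\<bar> = 0"
    hence "a = 0" "b = 0" by linarith+
    thus False using assms by simp
  qed
  ultimately show ?thesis by simp
qed

lemma of_int_floor_Ints: "x \<in> \<int> \<Longrightarrow> of_int \<lfloor>x\<rfloor> = (x::real)"
  by (metis Ints_cases floor_of_int)

theorem mainTheorem5:
  fixes n d :: nat and h :: int and z :: "nat \<Rightarrow> complex" and j1 j2 :: nat
  assumes hd: "d \<ge> 1"
    and hz: "\<And>j. gauss_int (z j)"
    and hstep: "\<And>j. cmod (z (Suc j) - z j) = 1"
    and hj: "z j2 - z j1 = of_nat n + \<i> * of_int h"
    and hk: "cdiv_k (int n) (int d) \<ge> \<bar>cdiv_r (int n) (int d)\<bar> + \<bar>h\<bar> + 1"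
  shows "\<exists>j3 j4. z j3 - z j4 = of_nat d"
  proof -
  define Xr where "Xr j = \<lfloor>Re (z j)\<rfloor>" for j
  define Yr where "Yr j = \<lfloor>Im (z j)\<rfloor>" for j
  have XR: "real_of_int (Xr j) = Re (z j)" "real_of_int (Yr j) = Im (z j)" for j
    using hz[of j] unfolding gauss_int_def Xr_def Yr_def by (auto intro: of_int_floor_Ints)
  have ustep: "\<bar>Xr (Suc j) - Xr j\<bar> + \<bar>Yr (Suc j) - Yr j\<bar> = 1" for j
  proof -
    define a where "a = Xr (Suc j) - Xr j"
    define b where "b = Yr (Suc j) - Yr j"
    have "Re (z (Suc j) - z j) = real_of_int a" "Im (z (Suc j) - z j) = real_of_int b"
      unfolding a_def b_def using XR by simp_all
    hence "sqrt (real_of_int a ^ 2 + real_of_int b ^ 2) = 1" using hstep[of j] unfolding cmod_def by simp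
    hence "real_of_int a ^ 2 + real_of_int b ^ 2 = 1"
      by (metis add_nonneg_nonneg real_sqrt_eq_1_iff zero_le_power2)
    hence "real_of_int (a * a + b * b) = 1" by (simp add: power2_eq_square)
    hence "a * a + b * b = 1" by linarith
    thus ?thesis using int_sq_unit unfolding a_def b_def by blast
  qed
  have dnn: "int d \<ge> 1" using hd by simp
  note cp = cdiv_props[OF dnn, of "int n"]
  have dif: "Xr j2 - Xr j1 = int n" "Yr j2 - Yr j1 = h"
  proof -
    have "Re (z j2 - z j1) = real n" "Im (z j2 - z j1) = real_of_int h" using hj by simp_all
    hence "real_of_int (Xr j2 - Xr j1) = real n" "real_of_int (Yr j2 - Yr j1) = real_of_int h" using XR by simp_all
    thus "Xr j2 - Xr j1 = int n" "Yr j2 - Yr j1 = h" by linarith+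
  qed
  define idx where "idx i = (if j1 \<le> j2 then j1 + i else j1 - i)" for i
  define m where "m = (if j1 \<le> j2 then j2 - j1 else j1 - j2)"
  define X where "X i = Xr (idx i) - Xr j1" for i
  define Y where "Y i = Yr (idx i) - Yr j1" for i
  have wk: "walk X Y m" unfolding walk_def
  proof (intro allI impI)
    fix t assume t: "t < m"
    show "\<bar>X (Suc t) - X t\<bar> + \<bar>Y (Suc t) - Y t\<bar> = 1"
    proof (cases "j1 \<le> j2")
      case True
      thus ?thesis using ustep[of "j1 + t"] unfolding X_def Y_def idx_def by simp
    next
      case False
      hence e: "idx t = Suc (idx (Suc t))" using t unfolding idx_def m_def by simp
      have "\<bar>Xr (idx t) - Xr (idx (Suc t))\<bar> + \<bar>Yr (idx t) - Yr (idx (Suc t))\<bar> = 1"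
        using ustep[of "idx (Suc t)"] unfolding e by simp
      thus ?thesis unfolding X_def Y_def by (simp add: abs_minus_commute)
    qed
  qed
  have im: "idx m = j2" "idx 0 = j1" unfolding idx_def m_def by auto
  have x0: "X 0 = 0" "Y 0 = 0" unfolding X_def Y_def im by simp_all
  have xm: "X m = cdiv_k (int n) (int d) * int d + cdiv_r (int n) (int d)" "Y m = h"
    unfolding X_def Y_def im using dif cp by simp_all
  have "chord (int d) X Y m"
    using aux_main[OF dnn, of m, rule_format, OF wk x0 xm cp(2) cp(3) hk] .
  then obtain s t where st: "s \<le> m" "t \<le> m" "X t = X s + int d" "Y t = Y s" unfolding chord_def by blast
  have e1: "Xr (idx t) - Xr (idx s) = int d" and e2: "Yr (idx t) - Yr (idx s) = 0"
    using st unfolding X_def Y_def by simp_all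
  have "Re (z (idx t) - z (idx s)) = real_of_int (Xr (idx t) - Xr (idx s))" using XR by simp
  also have "\<dots> = real d" unfolding e1 by simp
  finally have re: "Re (z (idx t) - z (idx s)) = real d" .
  have "Im (z (idx t) - z (idx s)) = real_of_int (Yr (idx t) - Yr (idx s))" using XR by simp
  also have "\<dots> = 0" unfolding e2 by simp
  finally have "Im (z (idx t) - z (idx s)) = 0" .
  note re this
  hence "z (idx t) - z (idx s) = of_nat d" by (simp add: complex_eq_iff)
  thus ?thesis by blast
qed

end
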